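(* Let $U=\begin{pmatrix} a & b\\ c & d\end{pmatrix}$ be a $2\times 2$ unitary matrix with $abcd\neq 0$, let $\varphi={}^t[\alpha,\beta]\in\mathbf{C}^2$ with $|\alpha|^2+|\beta|^2=1$, and let $X_n^{\varphi}$ be the position at time $n$ of the one-dimensional quantum random walk determined by $U$ started from $\varphi$ (defined in the context). Let $n\ge 1$ and $m\ge 1$ be integers, and write $\Re_\varphi = a\alpha\overline{b\beta}+\overline{a\alpha}b\beta$ and, for $1\le k$, $1\le \gamma,\delta\le k$, $$C_{k,\gamma,\delta}=\left(-\frac{|b|^2}{|a|^2}\right)^{\gamma+\delta}\binom{k-1}{\gamma-1}\binom{k-1}{\delta-1}\binom{n-k-1}{\gamma-1}\binom{n-k-1}{\delta-1}.$$ (i) If $m$ is odd, then $$E\big((X_n^{\varphi})^m\big)=|a|^{2(n-1)}\Big[-n^m\big\{(|a|^2-|b|^2)(|\alpha|^2-|\beta|^2)+2\Re_\varphi\big\}\Big]+\sum_{k=1}^{\lfloor (n-1)/2\rfloor}\sum_{\gamma=1}^{k}\sum_{\delta=1}^{k}C_{k,\gamma,\delta}\,\frac{(n-2k)^{m+1}}{\gamma\delta}\Big[-\{n(|a|^2-|b|^2)+\gamma+\delta\}(|\alpha|^2-|\beta|^2)+\Big(\frac{\gamma+\delta}{|b|^2}-2n\Big)\Re_\varphi\Big].$$ (ii) If $m$ is even, then $$E\big((X_n^{\varphi})^m\big)=|a|^{2(n-1)}\Big[n^m+\sum_{k=1}^{\lfloor (n-1)/2\rfloor}\sum_{\gamma=1}^{k}\sum_{\delta=1}^{k}C_{k,\gamma,\delta}\,\frac{(n-2k)^{m}}{\gamma\delta}\Big\{(n-k)^2+k^2-n(\gamma+\delta)+\frac{2\gamma\delta}{|b|^2}\Big\}\Big].$$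 In particular, for even $m$, $E((X_n^{\varphi})^m)$ does not depend on $\varphi$.
   Context: Quantum random walk on $\mathbf{Z}$ determined by a $2\times2$ unitary matrix $U=\begin{pmatrix} a & b\\ c & d\end{pmatrix}$: set $P=\begin{pmatrix} a & b\\ 0&0\end{pmatrix}$, $Q=\begin{pmatrix} 0&0\\ c & d\end{pmatrix}$ (so $U=P+Q$). Given an initial qubit state $\varphi={}^t[\alpha,\beta]\in\mathbf{C}^2$ with $|\alpha|^2+|\beta|^2=1$, define amplitudes $\Psi_k(n)\in\mathbf{C}^2$ ($k\in\mathbf{Z}$, $n\ge0$) by $\Psi_0(0)=\varphi$, $\Psi_k(0)=0$ for $k\neq0$, and $\Psi_k(n+1)=P\Psi_{k+1}(n)+Q\Psi_{k-1}(n)$. The random variable $X_n^{\varphi}$ takes value $k$ with probability $P(X_n^{\varphi}=k)=\|\Psi_k(n)\|^2$ (Euclidean norm squared); unitarity of $U$ makes this a probability distribution. $\lfloor x\rfloor$ is the integer part, $\overline{z}$ the complex conjugate. *)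

theory Defs
  imports "HOL-Analysis.Analysis"
begin

text \<open>P v = (a v1 + b v2, 0), Q v = (0, c v1 + d v2).\<close>
fun qw_amp :: "complex \<Rightarrow> complex \<Rightarrow> complex \<Rightarrow> complex \<Rightarrow> complex \<Rightarrow> complex
    \<Rightarrow> nat \<Rightarrow> int \<Rightarrow> complex \<times> complex" where
  "qw_amp a b c d \<alpha> \<beta> 0 k = (if k = 0 then (\<alpha>, \<beta>) else (0, 0))"
| "qw_amp a b c d \<alpha> \<beta> (Suc n) k =
     (let (x1, y1) = qw_amp a b c d \<alpha> \<beta> n (k + 1);
          (x2, y2) = qw_amp a b c d \<alpha> \<beta> n (k - 1)
      in (a * x1 + b * y1, c * x2 + d * y2))"

definition qw_prob :: "complex \<Rightarrow> complex \<Rightarrow> complex \<Rightarrow> complex \<Rightarrow> complex \<Rightarrow> complex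
    \<Rightarrow> nat \<Rightarrow> int \<Rightarrow> real" where
  "qw_prob a b c d \<alpha> \<beta> n k =
     (cmod (fst (qw_amp a b c d \<alpha> \<beta> n k)))\<^sup>2 + (cmod (snd (qw_amp a b c d \<alpha> \<beta> n k)))\<^sup>2"

definition qw_moment :: "complex \<Rightarrow> complex \<Rightarrow> complex \<Rightarrow> complex \<Rightarrow> complex \<Rightarrow> complex
    \<Rightarrow> nat \<Rightarrow> nat \<Rightarrow> real" where
  "qw_moment a b c d \<alpha> \<beta> n m = infsum (\<lambda>k::int. (real_of_int k) ^ m * qw_prob a b c d \<alpha> \<beta> n k) UNIV"

definition unitary2 :: "complex \<Rightarrow> complex \<Rightarrow> complex \<Rightarrow> complex \<Rightarrow> bool" where
  "unitary2 a b c d \<longleftrightarrow>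
     (a * cnj a + b * cnj b = 1 \<and> c * cnj c + d * cnj d = 1 \<and> a * cnj c + b * cnj d = 0
      \<and> cnj a * a + cnj c * c = 1 \<and> cnj b * b + cnj d * d = 1 \<and> cnj a * b + cnj c * d = 0)"

end

theory Submission
  imports Defs
begin


fun UW :: "complex \<Rightarrow> complex \<Rightarrow> complex \<Rightarrow> complex \<Rightarrow> complex \<Rightarrow> complex \<Rightarrow> nat \<Rightarrow> nat \<Rightarrow> complex \<times> complex" where
  "UW a b c d \<alpha> \<beta> 0 0 = (\<alpha>, \<beta>)"
| "UW a b c d \<alpha> \<beta> (Suc l) 0 = (a * fst (UW a b c d \<alpha> \<beta> l 0) + b * snd (UW a b c d \<alpha> \<beta> l 0), 0)"
| "UW a b c d \<alpha> \<beta> 0 (Suc m) = (0, c * fst (UW a b c d \<alpha> \<beta> 0 m) + d * snd (UW a b c d \<alpha> \<beta> 0 m))"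
| "UW a b c d \<alpha> \<beta> (Suc l) (Suc m) =
     (a * fst (UW a b c d \<alpha> \<beta> l (Suc m)) + b * snd (UW a b c d \<alpha> \<beta> l (Suc m)),
      c * fst (UW a b c d \<alpha> \<beta> (Suc l) m) + d * snd (UW a b c d \<alpha> \<beta> (Suc l) m))"

lemma amp_UW_aux:
  "(\<forall>l\<le>n. qw_amp a b c d \<alpha> \<beta> n (int n - 2 * int l) = UW a b c d \<alpha> \<beta> l (n - l)) \<and>
   (\<forall>k. (\<forall>l\<le>n. k \<noteq> int n - 2 * int l) \<longrightarrow> qw_amp a b c d \<alpha> \<beta> n k = (0, 0))"
proof (induction n)
  case 0
  then show ?case by auto
next
  case (Suc n)
  note IH1 = Suc.IH[THEN conjunct1, rule_format]
  note IH2 = Suc.IH[THEN conjunct2, rule_format]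
  have step: "qw_amp a b c d \<alpha> \<beta> (Suc n) k =
     (a * fst (qw_amp a b c d \<alpha> \<beta> n (k + 1)) + b * snd (qw_amp a b c d \<alpha> \<beta> n (k + 1)),
      c * fst (qw_amp a b c d \<alpha> \<beta> n (k - 1)) + d * snd (qw_amp a b c d \<alpha> \<beta> n (k - 1)))" for k
    by (simp add: Let_def split_beta)
  show ?case
  proof (intro conjI allI impI)
    fix l assume l: "l \<le> Suc n"
    show "qw_amp a b c d \<alpha> \<beta> (Suc n) (int (Suc n) - 2 * int l) = UW a b c d \<alpha> \<beta> l (Suc n - l)"
    proof (cases l)
      case 0
      have o: "qw_amp a b c d \<alpha> \<beta> n (int (Suc n) + 1) = (0,0)"
        by (rule IH2) auto
      have i: "qw_amp a b c d \<alpha> \<beta> n (int n - 2 * int 0) = UW a b c d \<alpha> \<beta> 0 (n - 0)"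
        by (rule IH1) auto
      show ?thesis using o i 0 by (simp add: step split_beta)
    next
      case (Suc l')
      show ?thesis
      proof (cases "n - l'")
        case 0
        then have ln: "l' = n" using l Suc by auto
        have o: "qw_amp a b c d \<alpha> \<beta> n (int (Suc n) - 2 * int (Suc n) - 1) = (0,0)"
          by (rule IH2) auto
        have i: "qw_amp a b c d \<alpha> \<beta> n (int n - 2 * int n) = UW a b c d \<alpha> \<beta> n (n - n)"
          by (rule IH1) auto
        have e: "int (Suc n) - 2 * int (Suc n) + 1 = int n - 2 * int n" by simp
        show ?thesis using o i Suc ln by (simp add: step e split_beta)
      next
        case (Suc m')
        have i1: "qw_amp a b c d \<alpha> \<beta> n (int n - 2 * int l') = UW a b c d \<alpha> \<beta> l' (n - l')"
          by (rule IH1) (use Suc in auto)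
        have i2: "qw_amp a b c d \<alpha> \<beta> n (int n - 2 * int (Suc l')) = UW a b c d \<alpha> \<beta> (Suc l') (n - Suc l')"
          by (rule IH1) (use Suc in auto)
        have e1: "int (Suc n) - 2 * int (Suc l') + 1 = int n - 2 * int l'" by simp
        have e2: "int (Suc n) - 2 * int (Suc l') - 1 = int n - 2 * int (Suc l')" by simp
        have e3: "Suc n - Suc l' = Suc m'" "n - Suc l' = m'" using Suc by auto
        have e4: "int n - 2 * int (Suc l') = int n - 2 * int l' - 2" by simp
        have i2': "qw_amp a b c d \<alpha> \<beta> n (int n - 2 * int l' - 2) = UW a b c d \<alpha> \<beta> (Suc l') m'"
          using i2 e3 by (simp only: e4)
        show ?thesis using i1 i2' \<open>l = Suc l'\<close> Suc by (simp add: step e1 e2 e3 split_beta)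
      qed
    qed
  next
    fix k assume k: "\<forall>l\<le>Suc n. k \<noteq> int (Suc n) - 2 * int l"
    have o1: "qw_amp a b c d \<alpha> \<beta> n (k + 1) = (0,0)"
    proof (rule IH2)
      fix l assume "l \<le> n"
      then show "k + 1 \<noteq> int n - 2 * int l" using k[rule_format, of "Suc l"] by auto
    qed
    have o2: "qw_amp a b c d \<alpha> \<beta> n (k - 1) = (0,0)"
    proof (rule IH2)
      fix l assume "l \<le> n"
      then show "k - 1 \<noteq> int n - 2 * int l" using k[rule_format, of "l"] by auto
    qed
    show "qw_amp a b c d \<alpha> \<beta> (Suc n) k = (0, 0)" using o1 o2 by (simp add: step split_beta)
  qed
qed



definition Ssum :: "'a::comm_ring_1 \<Rightarrow> nat \<Rightarrow> nat \<Rightarrow> 'a" where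
  "Ssum z p q = (\<Sum>i\<le>p+q. of_nat ((p choose i) * (q choose i)) * z ^ i)"
definition Tsum :: "'a::comm_ring_1 \<Rightarrow> nat \<Rightarrow> nat \<Rightarrow> 'a" where
  "Tsum z p q = (\<Sum>i\<le>p+q. of_nat ((p choose Suc i) * (q choose i)) * z ^ Suc i)"

lemma Ssum_sym: "Ssum z p q = Ssum z q p"
  unfolding Ssum_def by (simp add: add.commute mult.commute)

lemma Ssum_00: "Ssum z 0 q = 1"
  unfolding Ssum_def by (simp add: atMost_atLeast0 sum.atLeast_Suc_atMost) (auto intro!: sum.neutral simp: binomial_eq_0)

lemma Tsum_0: "Tsum z 0 q = 0"
  unfolding Tsum_def by simp

lemma Tsum_Suc: "Tsum z (Suc p) q = Tsum z p q + z * Ssum z p q"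
proof -
  have "Tsum z (Suc p) q = (\<Sum>i\<le>Suc (p+q). of_nat ((p choose Suc i) * (q choose i)) * z ^ Suc i)
      + (\<Sum>i\<le>Suc (p+q). of_nat ((p choose i) * (q choose i)) * z ^ Suc i)"
    unfolding Tsum_def by (simp add: algebra_simps sum.distrib)
  also have "\<dots> = Tsum z p q + z * Ssum z p q"
    unfolding Tsum_def Ssum_def by (simp add: sum.atMost_Suc binomial_eq_0 sum_distrib_left algebra_simps)
  finally show ?thesis .
qed

lemma Ssum_Suc: "Ssum z (Suc p) q = Ssum z p q + Tsum z q p"
proof -
  have "Ssum z (Suc p) q = 1 + (\<Sum>i\<le>p+q. of_nat ((Suc p choose Suc i) * (q choose Suc i)) * z ^ Suc i)"
    unfolding Ssum_def by (simp add: sum.atMost_Suc_shift del: sum.atMost_Suc)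
  also have "\<dots> = 1 + (\<Sum>i\<le>p+q. of_nat ((p choose Suc i) * (q choose Suc i)) * z ^ Suc i)
      + (\<Sum>i\<le>p+q. of_nat ((p choose i) * (q choose Suc i)) * z ^ Suc i)"
    by (simp add: algebra_simps sum.distrib)
  also have "1 + (\<Sum>i\<le>p+q. of_nat ((p choose Suc i) * (q choose Suc i)) * z ^ Suc i) = Ssum z p q"
  proof -
    have "Ssum z p q = (\<Sum>i\<le>Suc (p+q). of_nat ((p choose i) * (q choose i)) * z ^ i)"
      unfolding Ssum_def by (simp add: sum.atMost_Suc binomial_eq_0)
    also have "\<dots> = 1 + (\<Sum>i\<le>p+q. of_nat ((p choose Suc i) * (q choose Suc i)) * z ^ Suc i)"
      by (simp add: sum.atMost_Suc_shift del: sum.atMost_Suc)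
    finally show ?thesis by simp
  qed
  also have "(\<Sum>i\<le>p+q. of_nat ((p choose i) * (q choose Suc i)) * z ^ Suc i) = Tsum z q p"
    unfolding Tsum_def by (simp add: add.commute mult.commute)
  finally show ?thesis .
qed

lemma UW_edge1: "UW a b c d \<alpha> \<beta> (Suc l) 0 = (a ^ l * (a * \<alpha> + b * \<beta>), 0)"
  by (induction l) auto

lemma UW_edge2: "UW a b c d \<alpha> \<beta> 0 (Suc m) = (0, d ^ m * (c * \<alpha> + d * \<beta>))"
  by (induction m) auto

lemma UW_closed:
  fixes z a b c d \<alpha> \<beta> :: complex
  assumes z: "a * d * z = b * c"
  defines "X \<equiv> a * \<alpha> + b * \<beta>" and "Y \<equiv> c * \<alpha> + d * \<beta>"
  shows "UW a b c d \<alpha> \<beta> (Suc p) (Suc q) =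
    (a ^ p * d ^ q * (d * X * Tsum z p q + b * Y * Ssum z p q),
     a ^ p * d ^ q * (a * Y * Tsum z q p + c * X * Ssum z p q))"
proof (induction "p + q" arbitrary: p q)
  case 0
  then show ?case by (simp add: X_def Y_def Tsum_0 Ssum_00)
next
  case (Suc N)
  have fstp: "fst (UW a b c d \<alpha> \<beta> (Suc p) (Suc q)) = a ^ p * d ^ q * (d * X * Tsum z p q + b * Y * Ssum z p q)"
  proof (cases p)
    case 0
    then show ?thesis by (simp del: UW.simps(3) add: UW_edge2 X_def Y_def Tsum_0 Ssum_00)
  next
    case (Suc p')
    have IH: "UW a b c d \<alpha> \<beta> (Suc p') (Suc q) =
    (a ^ p' * d ^ q * (d * X * Tsum z p' q + b * Y * Ssum z p' q),
     a ^ p' * d ^ q * (a * Y * Tsum z q p' + c * X * Ssum z p' q))"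
      using Suc.hyps(1)[of p' q] Suc.hyps(2) Suc by simp
    have "fst (UW a b c d \<alpha> \<beta> (Suc p) (Suc q)) = a * (a ^ p' * d ^ q * (d * X * Tsum z p' q + b * Y * Ssum z p' q))
        + b * (a ^ p' * d ^ q * (a * Y * Tsum z q p' + c * X * Ssum z p' q))"
      using IH Suc by simp
    also have "\<dots> = a ^ p' * d ^ q * (a * d * X * Tsum z p' q + (b * c) * X * Ssum z p' q + a * b * Y * (Ssum z p' q + Tsum z q p'))"
      by (simp add: algebra_simps)
    also have "\<dots> = a ^ p' * d ^ q * (a * d * X * (Tsum z p' q + z * Ssum z p' q) + a * b * Y * (Ssum z p' q + Tsum z q p'))"
      by (simp add: z[symmetric] algebra_simps)
    also have "\<dots> = a ^ p * d ^ q * (d * X * Tsum z p q + b * Y * Ssum z p q)"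
      by (simp add: Suc Tsum_Suc Ssum_Suc algebra_simps)
    finally show ?thesis .
  qed
  have sndp: "snd (UW a b c d \<alpha> \<beta> (Suc p) (Suc q)) = a ^ p * d ^ q * (a * Y * Tsum z q p + c * X * Ssum z p q)"
  proof (cases q)
    case 0
    then show ?thesis by (simp del: UW.simps(2) add: UW_edge1 X_def Y_def Tsum_0 Ssum_00 Ssum_sym[of z p 0])
  next
    case (Suc q')
    have IH: "UW a b c d \<alpha> \<beta> (Suc p) (Suc q') =
    (a ^ p * d ^ q' * (d * X * Tsum z p q' + b * Y * Ssum z p q'),
     a ^ p * d ^ q' * (a * Y * Tsum z q' p + c * X * Ssum z p q'))"
      using Suc.hyps(1)[of p q'] Suc.hyps(2) Suc by simp
    have "snd (UW a b c d \<alpha> \<beta> (Suc p) (Suc q)) = c * (a ^ p * d ^ q' * (d * X * Tsum z p q' + b * Y * Ssum z p q'))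
        + d * (a ^ p * d ^ q' * (a * Y * Tsum z q' p + c * X * Ssum z p q'))"
      using IH Suc by simp
    also have "\<dots> = a ^ p * d ^ q' * (a * d * Y * Tsum z q' p + (b * c) * Y * Ssum z p q' + c * d * X * (Ssum z p q' + Tsum z p q'))"
      by (simp add: algebra_simps)
    also have "\<dots> = a ^ p * d ^ q' * (a * d * Y * (Tsum z q' p + z * Ssum z q' p) + c * d * X * (Ssum z q' p + Tsum z p q'))"
      by (simp add: z[symmetric] algebra_simps Ssum_sym[of z p q'])
    also have "\<dots> = a ^ p * d ^ q * (a * Y * Tsum z q p + c * X * Ssum z p q)"
      by (simp add: Suc Tsum_Suc Ssum_Suc algebra_simps Ssum_sym[of z p])
    finally show ?thesis .
  qed
  show ?case using fstp sndp by (simp add: prod_eq_iff)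
qed



lemma key:
  fixes a a' b b' e e' x x' y y' T1 T2 S :: complex
  assumes h1: "a*a' + b*b' = 1" and h2: "e*e' = 1"
  shows "(e*a' * (a*x+b*y) * T1 + b * (-e*b'*x + e*a'*y) * S) * (e'*a * (a'*x'+b'*y') * T1 + b' * (-e'*b*x' + e'*a*y') * S)
       + (a * (-e*b'*x + e*a'*y) * T2 + (-e*b') * (a*x+b*y) * S) * (a' * (-e'*b*x' + e'*a*y') * T2 + (-e'*b) * (a'*x'+b'*y') * S)
     = (a*a') * (a*x+b*y)*(a'*x'+b'*y') * T1^2 + (b*b') * (-e*b'*x + e*a'*y)*(-e'*b*x' + e'*a*y') * S^2
       + T1 * S * ((a*a' - b*b') * (a*x*b'*y' + a'*x'*b*y) - 2 * (a*a') * (b*b') * (x*x' - y*y'))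
       + (a*a') * (-e*b'*x + e*a'*y)*(-e'*b*x' + e'*a*y') * T2^2 + (b*b') * (a*x+b*y)*(a'*x'+b'*y') * S^2
       - T2 * S * ((a*a' - b*b') * (a*x*b'*y' + a'*x'*b*y) - 2 * (a*a') * (b*b') * (x*x' - y*y'))"
  using h1 h2 by algebra

lemma Tsum_of_real: "Tsum (of_real r) p q = (of_real (Tsum r p q) :: complex)"
  by (simp add: Tsum_def)
lemma Ssum_of_real: "Ssum (of_real r) p q = (of_real (Ssum r p q) :: complex)"
  by (simp add: Ssum_def)

lemma unitary_facts:
  fixes a b c d :: complex
  assumes U: "unitary2 a b c d" and nz: "a * b * c * d \<noteq> 0"
  defines "e \<equiv> d / cnj a"
  shows "d = e * cnj a" "c = - e * cnj b" "e * cnj e = 1" "a * cnj a + b * cnj b = 1"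
    "a \<noteq> 0" "b \<noteq> 0" "c \<noteq> 0" "d \<noteq> 0"
proof -
  have u1: "a * cnj a + b * cnj b = 1" and u3: "a * cnj c + b * cnj d = 0"
    and u5: "cnj b * b + cnj d * d = 1" using U unfolding unitary2_def by auto
  show ne: "a \<noteq> 0" "b \<noteq> 0" "c \<noteq> 0" "d \<noteq> 0" using nz by auto
  then have ca: "cnj a \<noteq> 0" by simp
  show "d = e * cnj a" unfolding e_def using ca by simp
  have "cnj (a * cnj c + b * cnj d) = 0" using u3 by simp
  then have "cnj a * c + cnj b * d = 0" by simp
  then have "c = - cnj b * d / cnj a" using ca by (simp add: field_simps add_eq_0_iff)
  then show "c = - e * cnj b" unfolding e_def by simp
  have dd: "d * cnj d = a * cnj a" using u1 u5 by algebra
  show "e * cnj e = 1" unfolding e_def using ca dd ne by (simp add: field_simps)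
  show "a * cnj a + b * cnj b = 1" by (rule u1)
qed

lemma prob_closed:
  fixes a b c d \<alpha> \<beta> :: complex and p q :: nat
  assumes U: "unitary2 a b c d" and nz: "a * b * c * d \<noteq> 0"
  defines "A \<equiv> (cmod a)\<^sup>2" and "B \<equiv> (cmod b)\<^sup>2"
    and "X \<equiv> a * \<alpha> + b * \<beta>" and "Y \<equiv> c * \<alpha> + d * \<beta>"
    and "D \<equiv> (cmod \<alpha>)\<^sup>2 - (cmod \<beta>)\<^sup>2"
    and "R \<equiv> Re (a * \<alpha> * cnj (b * \<beta>) + cnj (a * \<alpha>) * b * \<beta>)"
  defines "\<rho> \<equiv> (A - B) * R - 2 * A * B * D"
  defines "T1 \<equiv> Tsum (- B / A) p q" and "T2 \<equiv> Tsum (- B / A) q p" and "S \<equiv> Ssum (- B / A) p q"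
  shows "(cmod (fst (UW a b c d \<alpha> \<beta> (Suc p) (Suc q))))\<^sup>2 + (cmod (snd (UW a b c d \<alpha> \<beta> (Suc p) (Suc q))))\<^sup>2
    = A ^ (p + q) * (A * (cmod X)\<^sup>2 * T1\<^sup>2 + B * (cmod Y)\<^sup>2 * S\<^sup>2 + T1 * S * \<rho>
         + A * (cmod Y)\<^sup>2 * T2\<^sup>2 + B * (cmod X)\<^sup>2 * S\<^sup>2 - T2 * S * \<rho>)"
proof -
  define e where "e = d / cnj a"
  note uf = unitary_facts[OF U nz, folded e_def]
  have cA: "complex_of_real A = a * cnj a" unfolding A_def using complex_norm_square by simp
  have cB: "complex_of_real B = b * cnj b" unfolding B_def using complex_norm_square by simp
  have cD: "complex_of_real D = \<alpha> * cnj \<alpha> - \<beta> * cnj \<beta>" unfolding D_def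
    using complex_norm_square[of \<alpha>] complex_norm_square[of \<beta>] by simp
  have reR: "complex_of_real (Re w) = w" if "Im w = 0" for w using that by (simp add: complex_eq_iff)
  have cR: "complex_of_real R = a * \<alpha> * cnj b * cnj \<beta> + cnj a * cnj \<alpha> * b * \<beta>" unfolding R_def
    by (subst reR) (simp_all add: algebra_simps)
  have Anz: "A \<noteq> 0" unfolding A_def using uf(5) by simp
  have zc: "a * d * complex_of_real (- B / A) = b * c"
    using uf(5) by (simp add: cA cB uf(1) uf(2) field_simps)
  note cl = UW_closed[OF zc, of \<alpha> \<beta> p q, folded X_def Y_def, unfolded Tsum_of_real Ssum_of_real,
      folded T1_def T2_def S_def]
  define U1 where "U1 = d * X * complex_of_real T1 + b * Y * complex_of_real S"
  define W1 where "W1 = a * Y * complex_of_real T2 + c * X * complex_of_real S"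
  have e1: "complex_of_real ((cmod (a ^ p * d ^ q * U1))\<^sup>2) = (a * cnj a) ^ p * (d * cnj d) ^ q * (U1 * cnj U1)"
    unfolding complex_norm_square by (simp add: power_mult_distrib algebra_simps)
  have e2: "complex_of_real ((cmod (a ^ p * d ^ q * W1))\<^sup>2) = (a * cnj a) ^ p * (d * cnj d) ^ q * (W1 * cnj W1)"
    unfolding complex_norm_square by (simp add: power_mult_distrib algebra_simps)
  have dd: "d * cnj d = a * cnj a" using uf(1) uf(3) by (simp add: algebra_simps)
  have hX: "cnj X = cnj a * cnj \<alpha> + cnj b * cnj \<beta>" unfolding X_def by simp
  have hY: "cnj Y = cnj c * cnj \<alpha> + cnj d * cnj \<beta>" unfolding Y_def by simp
  have hdc: "cnj d = cnj e * a" using uf(1) by (metis complex_cnj_cnj complex_cnj_mult)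
  have hcc: "cnj c = - cnj e * b" using uf(2) by (metis complex_cnj_cnj complex_cnj_mult complex_cnj_minus)
  define NX where "NX = (cmod X)\<^sup>2"
  define NY where "NY = (cmod Y)\<^sup>2"
  have cNX: "complex_of_real NX = X * cnj X" unfolding NX_def complex_norm_square ..
  have cNY: "complex_of_real NY = Y * cnj Y" unfolding NY_def complex_norm_square ..
  have k0: "U1 * cnj U1 + W1 * cnj W1 = complex_of_real (A * NX * T1\<^sup>2 + B * NY * S\<^sup>2 + T1 * S * \<rho>
         + A * NY * T2\<^sup>2 + B * NX * S\<^sup>2 - T2 * S * \<rho>)"
    unfolding U1_def W1_def \<rho>_def of_real_add of_real_diff of_real_mult of_real_power
      cA cB cD cR cNX cNY complex_cnj_add complex_cnj_mult complex_cnj_complex_of_real of_real_numeral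
    using X_def[THEN meta_eq_to_obj_eq] Y_def[THEN meta_eq_to_obj_eq] hX hY uf(1) uf(2) uf(3) uf(4) hdc hcc by algebra
  have k: "U1 * cnj U1 + W1 * cnj W1 = complex_of_real (A * (cmod X)\<^sup>2 * T1\<^sup>2 + B * (cmod Y)\<^sup>2 * S\<^sup>2 + T1 * S * \<rho>
         + A * (cmod Y)\<^sup>2 * T2\<^sup>2 + B * (cmod X)\<^sup>2 * S\<^sup>2 - T2 * S * \<rho>)"
    using k0 unfolding NX_def NY_def .
  show ?thesis
    apply (rule of_real_eq_iff[where 'a=complex, THEN iffD1])
    apply (simp only: cl fst_conv snd_conv flip: U1_def W1_def)
    apply (simp only: of_real_add e1 e2 dd)
    apply (simp only: distrib_left[symmetric] k flip: of_real_mult)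
    apply (simp add: cA power_add)
    done
qed



definition s1sum :: "real \<Rightarrow> nat \<Rightarrow> nat \<Rightarrow> real" where
  "s1sum z p q = (\<Sum>i\<le>p+q. z ^ Suc i * real (p choose i) * real (q choose i) / real (Suc i))"

lemma s1sum_sym: "s1sum z p q = s1sum z q p"
  unfolding s1sum_def by (simp add: add.commute mult.commute mult.left_commute)

lemma s1sum_rel: "real (Suc p) * s1sum z p q = Tsum z p q + z * Ssum z p q"
proof -
  have "real (Suc p) * s1sum z p q = (\<Sum>i\<le>p+q. real (Suc p) * (z ^ Suc i * real (p choose i) * real (q choose i) / real (Suc i)))"
    unfolding s1sum_def by (simp add: sum_distrib_left)
  also have "\<dots> = (\<Sum>i\<le>p+q. (real (p choose Suc i) + real (p choose i)) * real (q choose i) * z ^ Suc i)"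
  proof (rule sum.cong[OF refl])
    fix i
    have h: "real (Suc p) * real (p choose i) = real (Suc p choose Suc i) * real (Suc i)"
      using Suc_times_binomial_eq[of p i] by (metis of_nat_mult)
    have h2: "real (Suc p choose Suc i) = real (p choose Suc i) + real (p choose i)" by simp
    show "real (Suc p) * (z ^ Suc i * real (p choose i) * real (q choose i) / real (Suc i)) =
        (real (p choose Suc i) + real (p choose i)) * real (q choose i) * z ^ Suc i"
      using h unfolding h2[symmetric] by (simp add: field_simps del: of_nat_Suc binomial_Suc_Suc)
  qed
  also have "\<dots> = Tsum z p q + z * Ssum z p q"
    unfolding Tsum_def Ssum_def by (simp add: sum.distrib sum_distrib_left algebra_simps)
  finally show ?thesis .
qed

lemma sum_extend_atMost:
  fixes f :: "nat \<Rightarrow> 'a::comm_monoid_add"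
  assumes "M \<le> N" "\<And>i. M < i \<Longrightarrow> f i = 0"
  shows "sum f {..N} = sum f {..M}"
  by (rule sum.mono_neutral_right) (use assms in auto)

lemma sig0_eq:
  fixes z :: real
  shows "(\<Sum>\<gamma>=1..Suc p. z ^ \<gamma> * real (p choose (\<gamma> - 1)) * real (N choose (\<gamma> - 1))) = z * Ssum z p N"
proof -
  have "(\<Sum>\<gamma>=1..Suc p. z ^ \<gamma> * real (p choose (\<gamma> - 1)) * real (N choose (\<gamma> - 1)))
      = (\<Sum>i\<le>p. z ^ Suc i * real (p choose i) * real (N choose i))"
    by (simp add: sum.shift_bounds_cl_Suc_ivl atMost_atLeast0 del: sum.cl_ivl_Suc)
  also have "\<dots> = (\<Sum>i\<le>p+N. z ^ Suc i * real (p choose i) * real (N choose i))"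
    by (rule sum_extend_atMost[symmetric]) (auto simp: binomial_eq_0)
  also have "\<dots> = z * Ssum z p N" unfolding Ssum_def by (simp add: sum_distrib_left algebra_simps)
  finally show ?thesis .
qed

lemma sig1_eq:
  fixes z :: real
  shows "(\<Sum>\<gamma>=1..Suc p. z ^ \<gamma> * real (p choose (\<gamma> - 1)) * real (N choose (\<gamma> - 1)) / real \<gamma>) = s1sum z p N"
proof -
  have "(\<Sum>\<gamma>=1..Suc p. z ^ \<gamma> * real (p choose (\<gamma> - 1)) * real (N choose (\<gamma> - 1)) / real \<gamma>)
      = (\<Sum>i\<le>p. z ^ Suc i * real (p choose i) * real (N choose i) / real (Suc i))"
    by (simp add: sum.shift_bounds_cl_Suc_ivl atMost_atLeast0 del: sum.cl_ivl_Suc of_nat_Suc)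
  also have "\<dots> = (\<Sum>i\<le>p+N. z ^ Suc i * real (p choose i) * real (N choose i) / real (Suc i))"
    by (rule sum_extend_atMost[symmetric]) (auto simp: binomial_eq_0)
  also have "\<dots> = s1sum z p N" unfolding s1sum_def ..
  finally show ?thesis .
qed

lemma double_sum_lemma:
  fixes u v :: "nat \<Rightarrow> real"
  shows "(\<Sum>\<gamma>\<in>I. \<Sum>\<delta>\<in>I. c1 * (u \<gamma> * u \<delta>) + c2 * (v \<gamma> * u \<delta> + u \<gamma> * v \<delta>) + c3 * (v \<gamma> * v \<delta>))
    = c1 * (sum u I)\<^sup>2 + 2 * c2 * (sum u I * sum v I) + c3 * (sum v I)\<^sup>2"
proof -
  have "(\<Sum>\<gamma>\<in>I. \<Sum>\<delta>\<in>I. c1 * (u \<gamma> * u \<delta>) + c2 * (v \<gamma> * u \<delta> + u \<gamma> * v \<delta>) + c3 * (v \<gamma> * v \<delta>))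
    = c1 * (\<Sum>\<gamma>\<in>I. \<Sum>\<delta>\<in>I. u \<gamma> * u \<delta>) + c2 * ((\<Sum>\<gamma>\<in>I. \<Sum>\<delta>\<in>I. v \<gamma> * u \<delta>) + (\<Sum>\<gamma>\<in>I. \<Sum>\<delta>\<in>I. u \<gamma> * v \<delta>))
      + c3 * (\<Sum>\<gamma>\<in>I. \<Sum>\<delta>\<in>I. v \<gamma> * v \<delta>)"
    by (simp add: sum.distrib sum_distrib_left distrib_left)
  also have "\<dots> = c1 * (sum u I * sum u I) + c2 * (sum v I * sum u I + sum u I * sum v I) + c3 * (sum v I * sum v I)"
    by (simp only: sum_product)
  finally show ?thesis by (simp add: power2_eq_square algebra_simps)
qed

lemma norms_XY:
  fixes a b c d \<alpha> \<beta> :: complex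
  assumes U: "unitary2 a b c d" and nz: "a * b * c * d \<noteq> 0"
    and phi: "(cmod \<alpha>)\<^sup>2 + (cmod \<beta>)\<^sup>2 = 1"
  defines "A \<equiv> (cmod a)\<^sup>2" and "B \<equiv> (cmod b)\<^sup>2"
    and "X \<equiv> a * \<alpha> + b * \<beta>" and "Y \<equiv> c * \<alpha> + d * \<beta>"
    and "D \<equiv> (cmod \<alpha>)\<^sup>2 - (cmod \<beta>)\<^sup>2"
    and "R \<equiv> Re (a * \<alpha> * cnj (b * \<beta>) + cnj (a * \<alpha>) * b * \<beta>)"
  shows "(cmod X)\<^sup>2 + (cmod Y)\<^sup>2 = 1" "(cmod X)\<^sup>2 - (cmod Y)\<^sup>2 = (A - B) * D + 2 * R" "A + B = 1"
proof -
  define e where "e = d / cnj a"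
  note uf = unitary_facts[OF U nz, folded e_def]
  have cA: "complex_of_real A = a * cnj a" unfolding A_def using complex_norm_square by simp
  have cB: "complex_of_real B = b * cnj b" unfolding B_def using complex_norm_square by simp
  have cD: "complex_of_real D = \<alpha> * cnj \<alpha> - \<beta> * cnj \<beta>" unfolding D_def
    using complex_norm_square[of \<alpha>] complex_norm_square[of \<beta>] by simp
  have reR: "complex_of_real (Re w) = w" if "Im w = 0" for w using that by (simp add: complex_eq_iff)
  have cR: "complex_of_real R = a * \<alpha> * cnj b * cnj \<beta> + cnj a * cnj \<alpha> * b * \<beta>" unfolding R_def
    by (subst reR) (simp_all add: algebra_simps)
  have cphi: "\<alpha> * cnj \<alpha> + \<beta> * cnj \<beta> = 1"
    using arg_cong[OF phi, of complex_of_real] unfolding of_real_add complex_norm_square by simp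
  have hX: "cnj X = cnj a * cnj \<alpha> + cnj b * cnj \<beta>" unfolding X_def by simp
  have hY: "cnj Y = cnj c * cnj \<alpha> + cnj d * cnj \<beta>" unfolding Y_def by simp
  have hdc: "cnj d = cnj e * a" using uf(1) by (metis complex_cnj_cnj complex_cnj_mult)
  have hcc: "cnj c = - cnj e * b" using uf(2) by (metis complex_cnj_cnj complex_cnj_mult complex_cnj_minus)
  have "complex_of_real ((cmod X)\<^sup>2 + (cmod Y)\<^sup>2) = 1"
    unfolding of_real_add complex_norm_square
    using X_def[THEN meta_eq_to_obj_eq] Y_def[THEN meta_eq_to_obj_eq] hX hY uf(1) uf(2) uf(3) uf(4) hdc hcc cphi by algebra
  then show "(cmod X)\<^sup>2 + (cmod Y)\<^sup>2 = 1" by (metis of_real_eq_1_iff)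
  have "complex_of_real ((cmod X)\<^sup>2 - (cmod Y)\<^sup>2) = complex_of_real ((A - B) * D + 2 * R)"
    unfolding of_real_add of_real_diff of_real_mult complex_norm_square cA cB cD cR of_real_numeral
    using X_def[THEN meta_eq_to_obj_eq] Y_def[THEN meta_eq_to_obj_eq] hX hY uf(1) uf(2) uf(3) uf(4) hdc hcc by algebra
  then show "(cmod X)\<^sup>2 - (cmod Y)\<^sup>2 = (A - B) * D + 2 * R" by (metis of_real_eq_iff)
  have "complex_of_real (A + B) = 1" unfolding of_real_add cA cB using uf(4) .
  then show "A + B = 1" by (metis of_real_eq_1_iff)
qed



lemma pair_sum:
  fixes g :: "nat \<Rightarrow> real"
  assumes mid: "even n \<Longrightarrow> g (n div 2) = 0"
  shows "(\<Sum>l=1..n-1. g l) = (\<Sum>k=1..(n-1) div 2. g k + g (n - k))"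
proof -
  define h where "h = (n - 1) div 2"
  define M where "M = (if even n \<and> n \<ge> 2 then {n div 2} else {})"
  have seteq: "{1..n-1} = {1..h} \<union> (M \<union> (\<lambda>k. n - k) ` {1..h})"
  proof (rule set_eqI, rule iffI)
    fix l assume l: "l \<in> {1..n-1}"
    show "l \<in> {1..h} \<union> (M \<union> (\<lambda>k. n - k) ` {1..h})"
    proof (cases "l \<le> h")
      case True then show ?thesis using l by auto
    next
      case False
      show ?thesis
      proof (cases "even n \<and> l = n div 2")
        case True then show ?thesis using l unfolding M_def by auto
      next
        case F2: False
        have "n - l \<in> {1..h}" using l False F2 unfolding h_def by (auto; presburger)
        moreover have "l = n - (n - l)" using l by auto
        ultimately show ?thesis by blast
      qed
    qed
  next
    fix l assume "l \<in> {1..h} \<union> (M \<union> (\<lambda>k. n - k) ` {1..h})"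
    then show "l \<in> {1..n-1}" unfolding h_def M_def by (auto split: if_splits)
  qed
  have d1: "{1..h} \<inter> (M \<union> (\<lambda>k. n - k) ` {1..h}) = {}" unfolding h_def M_def by auto
  have d2: "M \<inter> (\<lambda>k. n - k) ` {1..h} = {}" unfolding h_def M_def by auto
  have inj: "inj_on (\<lambda>k. n - k) {1..h}" unfolding h_def by (auto simp: inj_on_def)
  have fM: "finite M" unfolding M_def by auto
  have sM: "sum g M = 0" unfolding M_def using mid by auto
  have "(\<Sum>l=1..n-1. g l) = sum g {1..h} + (sum g M + sum g ((\<lambda>k. n - k) ` {1..h}))"
  proof -
    have "sum g ({1..h} \<union> (M \<union> (\<lambda>k. n - k) ` {1..h})) = sum g {1..h} + sum g (M \<union> (\<lambda>k. n - k) ` {1..h})"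
      by (rule sum.union_disjoint) (use fM d1 in auto)
    also have "sum g (M \<union> (\<lambda>k. n - k) ` {1..h}) = sum g M + sum g ((\<lambda>k. n - k) ` {1..h})"
      by (rule sum.union_disjoint) (use fM d2 in auto)
    finally show ?thesis unfolding seteq .
  qed
  also have "\<dots> = sum g {1..h} + (\<Sum>k=1..h. g (n - k))"
    using sM sum.reindex[OF inj, of g] by (simp add: comp_def)
  finally show ?thesis unfolding h_def by (simp add: sum.distrib)
qed

lemma moment_sum:
  "qw_moment a b c d \<alpha> \<beta> n m = (\<Sum>l=0..n. (real_of_int (int n - 2 * int l)) ^ m *
     ((cmod (fst (UW a b c d \<alpha> \<beta> l (n - l))))\<^sup>2 + (cmod (snd (UW a b c d \<alpha> \<beta> l (n - l))))\<^sup>2))"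
proof -
  define g where "g = (\<lambda>k::int. (real_of_int k) ^ m * qw_prob a b c d \<alpha> \<beta> n k)"
  define h where "h = (\<lambda>l::nat. int n - 2 * int l)"
  have z: "g k = 0" if "k \<notin> h ` {0..n}" for k
  proof -
    have "\<forall>l\<le>n. k \<noteq> int n - 2 * int l" using that unfolding h_def by auto
    then have "qw_amp a b c d \<alpha> \<beta> n k = (0,0)" using amp_UW_aux[of n a b c d \<alpha> \<beta>] by blast
    then show ?thesis unfolding g_def qw_prob_def by simp
  qed
  have inj: "inj_on h {0..n}" unfolding h_def by (auto simp: inj_on_def)
  have "qw_moment a b c d \<alpha> \<beta> n m = infsum g UNIV" unfolding qw_moment_def g_def ..
  also have "\<dots> = infsum g (h ` {0..n})"
    by (rule infsum_cong_neutral) (use z in auto)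
  also have "\<dots> = sum g (h ` {0..n})" by simp
  also have "\<dots> = (\<Sum>l=0..n. g (h l))" by (simp add: sum.reindex[OF inj])
  also have "\<dots> = (\<Sum>l=0..n. (real_of_int (int n - 2 * int l)) ^ m *
     ((cmod (fst (UW a b c d \<alpha> \<beta> l (n - l))))\<^sup>2 + (cmod (snd (UW a b c d \<alpha> \<beta> l (n - l))))\<^sup>2))"
  proof (rule sum.cong[OF refl])
    fix l assume "l \<in> {0..n}"
    then have "qw_amp a b c d \<alpha> \<beta> n (h l) = UW a b c d \<alpha> \<beta> l (n - l)"
      using amp_UW_aux[of n a b c d \<alpha> \<beta>] unfolding h_def by auto
    then show "g (h l) = (real_of_int (int n - 2 * int l)) ^ m *
     ((cmod (fst (UW a b c d \<alpha> \<beta> l (n - l))))\<^sup>2 + (cmod (snd (UW a b c d \<alpha> \<beta> l (n - l))))\<^sup>2)" unfolding g_def qw_prob_def h_def by simp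
  qed
  finally show ?thesis .
qed

lemma alg_even:
  fixes A B NX NY S T1 T2 s1 K M AN :: real
  assumes AB: "A + B = 1" and A0: "A \<noteq> 0" and B0: "B \<noteq> 0" and N: "NX + NY = 1"
    and t1: "K * s1 = T1 + (-B/A) * S" and t2: "M * s1 = T2 + (-B/A) * S"
  shows "AN * (A*NX*T1\<^sup>2 + B*NY*S\<^sup>2 + T1*S*\<rho> + A*NY*T2\<^sup>2 + B*NX*S\<^sup>2 - T2*S*\<rho>)
       + AN * (A*NX*T2\<^sup>2 + B*NY*S\<^sup>2 + T2*S*\<rho> + A*NY*T1\<^sup>2 + B*NX*S\<^sup>2 - T1*S*\<rho>)
     = AN * A * ((K\<^sup>2 + M\<^sup>2) * s1\<^sup>2 - 2 * (K + M) * ((-B/A) * S) * s1 + 2 * ((-B/A) * S)\<^sup>2 / B)"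
proof -
  have T1: "T1 = K * s1 + B / A * S" using t1 by simp
  have T2: "T2 = M * s1 + B / A * S" using t2 by simp
  have NY: "NY = 1 - NX" using N by simp
  have Bv: "B = 1 - A" using AB by simp
  show ?thesis unfolding T1 T2 NY using A0 B0 unfolding Bv
    by (simp add: field_simps power2_eq_square)
qed

lemma alg_odd:
  fixes A B NX NY S T1 T2 s1 K M AN D R :: real
  assumes AB: "A + B = 1" and A0: "A \<noteq> 0" and B0: "B \<noteq> 0" and N: "NX + NY = 1"
    and W: "NX - NY = (A - B) * D + 2 * R"
    and t1: "K * s1 = T1 + (-B/A) * S" and t2: "M * s1 = T2 + (-B/A) * S"
    and rho: "\<rho> = (A - B) * R - 2 * A * B * D"
  shows "AN * (A*NX*T1\<^sup>2 + B*NY*S\<^sup>2 + T1*S*\<rho> + A*NY*T2\<^sup>2 + B*NX*S\<^sup>2 - T2*S*\<rho>)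
       - AN * (A*NX*T2\<^sup>2 + B*NY*S\<^sup>2 + T2*S*\<rho> + A*NY*T1\<^sup>2 + B*NX*S\<^sup>2 - T1*S*\<rho>)
     = AN * A * ((M - K) * (s1\<^sup>2 * (- (K + M) * (A - B) * D - 2 * (K + M) * R)
            + 2 * ((-B/A) * S) * s1 * (R / B - D)))"
proof -
  have T1: "T1 = K * s1 + B / A * S" using t1 by simp
  have T2: "T2 = M * s1 + B / A * S" using t2 by simp
  have NX: "NX = (1 + (A - B) * D + 2 * R) / 2" using N W by simp
  have NY: "NY = (1 - (A - B) * D - 2 * R) / 2" using N W by simp
  have Bv: "B = 1 - A" using AB by simp
  show ?thesis unfolding T1 T2 NY NX rho using A0 B0 unfolding Bv
    by (simp add: field_simps power2_eq_square)
qed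



lemma per_k:
  fixes a b c d \<alpha> \<beta> :: complex and n k :: nat
  assumes U: "unitary2 a b c d" and nz: "a * b * c * d \<noteq> 0"
    and phi: "(cmod \<alpha>)\<^sup>2 + (cmod \<beta>)\<^sup>2 = 1"
    and k1: "1 \<le> k" and kn: "k < n"
  defines "A \<equiv> (cmod a)\<^sup>2" and "B \<equiv> (cmod b)\<^sup>2"
    and "D \<equiv> (cmod \<alpha>)\<^sup>2 - (cmod \<beta>)\<^sup>2"
    and "R \<equiv> Re (a * \<alpha> * cnj (b * \<beta>) + cnj (a * \<alpha>) * b * \<beta>)"
  defines "z \<equiv> - B / A"
  defines "\<sigma>0 \<equiv> z * Ssum z (k - 1) (n - k - 1)" and "\<sigma>1 \<equiv> s1sum z (k - 1) (n - k - 1)"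
  defines "Pr \<equiv> (\<lambda>l. (cmod (fst (UW a b c d \<alpha> \<beta> l (n - l))))\<^sup>2 + (cmod (snd (UW a b c d \<alpha> \<beta> l (n - l))))\<^sup>2)"
  shows "Pr k + Pr (n - k) = A ^ (n - 1) * (((real k)\<^sup>2 + (real n - real k)\<^sup>2) * \<sigma>1\<^sup>2 - 2 * real n * \<sigma>0 * \<sigma>1 + 2 * \<sigma>0\<^sup>2 / B)"
    and "Pr k - Pr (n - k) = A ^ (n - 1) * ((real n - 2 * real k) * (\<sigma>1\<^sup>2 * (- real n * (A - B) * D - 2 * real n * R) + 2 * \<sigma>0 * \<sigma>1 * (R / B - D)))"
proof -
  obtain p where p: "k = Suc p" using k1 by (cases k) auto
  obtain q where q: "n - k = Suc q" using kn by (cases "n - k") auto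
  have n: "n = Suc (Suc (p + q))" using p q kn by auto
  have np: "n - k - 1 = q" "k - 1 = p" "n - (n - k) = Suc p" using p q by auto
  have nq: "n - Suc q = Suc p" using n by simp
  have nkq: "n - Suc (Suc p) = q" using n by simp
  note nrm = norms_XY[OF U nz phi, folded A_def B_def D_def R_def]
  have A0: "A \<noteq> 0" unfolding A_def using nz by auto
  have B0: "B \<noteq> 0" unfolding B_def using nz by auto
  define \<rho> where "\<rho> = (A - B) * R - 2 * A * B * D"
  have P1: "Pr k = A ^ (p + q) * (A * (cmod (a * \<alpha> + b * \<beta>))\<^sup>2 * (Tsum z p q)\<^sup>2 + B * (cmod (c * \<alpha> + d * \<beta>))\<^sup>2 * (Ssum z p q)\<^sup>2 + Tsum z p q * Ssum z p q * \<rho>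
         + A * (cmod (c * \<alpha> + d * \<beta>))\<^sup>2 * (Tsum z q p)\<^sup>2 + B * (cmod (a * \<alpha> + b * \<beta>))\<^sup>2 * (Ssum z p q)\<^sup>2 - Tsum z q p * Ssum z p q * \<rho>)"
    unfolding Pr_def p q[unfolded p] using prob_closed[OF U nz, of \<alpha> \<beta> p q, folded A_def B_def D_def R_def, folded \<rho>_def z_def] by simp
  have P2: "Pr (n - k) = A ^ (p + q) * (A * (cmod (a * \<alpha> + b * \<beta>))\<^sup>2 * (Tsum z q p)\<^sup>2 + B * (cmod (c * \<alpha> + d * \<beta>))\<^sup>2 * (Ssum z p q)\<^sup>2 + Tsum z q p * Ssum z p q * \<rho>
         + A * (cmod (c * \<alpha> + d * \<beta>))\<^sup>2 * (Tsum z p q)\<^sup>2 + B * (cmod (a * \<alpha> + b * \<beta>))\<^sup>2 * (Ssum z p q)\<^sup>2 - Tsum z p q * Ssum z p q * \<rho>)"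
    unfolding Pr_def np(3) q using prob_closed[OF U nz, of \<alpha> \<beta> q p, folded A_def B_def D_def R_def, folded \<rho>_def z_def]
    by (simp del: UW.simps add: Ssum_sym[of z q p] add.commute nq)
  have t1: "real k * \<sigma>1 = Tsum z p q + (-B/A) * Ssum z p q"
    unfolding \<sigma>1_def np p using s1sum_rel[of p z q] unfolding z_def by (simp add: nkq)
  have t2: "(real n - real k) * \<sigma>1 = Tsum z q p + (-B/A) * Ssum z p q"
  proof -
    have "real n - real k = real (Suc q)" using q kn by (simp add: of_nat_diff[symmetric])
    then show ?thesis
      unfolding \<sigma>1_def np using s1sum_rel[of q z p] s1sum_sym[of z p q] Ssum_sym[of z p q] unfolding z_def by simp
  qed
  have e0: "\<sigma>0 = (-B/A) * Ssum z p q" unfolding \<sigma>0_def np z_def ..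
  have AN: "A ^ (n - 1) = A ^ (p + q) * A" unfolding n by simp
  have rn: "real n = real k + (real n - real k)" by simp
  show "Pr k + Pr (n - k) = A ^ (n - 1) * (((real k)\<^sup>2 + (real n - real k)\<^sup>2) * \<sigma>1\<^sup>2 - 2 * real n * \<sigma>0 * \<sigma>1 + 2 * \<sigma>0\<^sup>2 / B)"
    unfolding P1 P2 AN e0
    using alg_even[OF nrm(3) A0 B0 nrm(1) t1 t2, of "A ^ (p + q)" \<rho>] by (simp add: algebra_simps)
  show "Pr k - Pr (n - k) = A ^ (n - 1) * ((real n - 2 * real k) * (\<sigma>1\<^sup>2 * (- real n * (A - B) * D - 2 * real n * R) + 2 * \<sigma>0 * \<sigma>1 * (R / B - D)))"
    unfolding P1 P2 AN e0
    using alg_odd[OF nrm(3) A0 B0 nrm(1) nrm(2) t1 t2 \<rho>_def, of "A ^ (p + q)"] by (simp add: algebra_simps)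
qed



theorem proposition2:
  fixes a b c d \<alpha> \<beta> :: complex and n m :: nat
  assumes U: "unitary2 a b c d"
    and nz: "a * b * c * d \<noteq> 0"
    and phi: "(cmod \<alpha>)\<^sup>2 + (cmod \<beta>)\<^sup>2 = 1"
    and n: "n \<ge> 1" and m: "m \<ge> 1"
  defines "A \<equiv> (cmod a)\<^sup>2" and "B \<equiv> (cmod b)\<^sup>2"
    and "D \<equiv> (cmod \<alpha>)\<^sup>2 - (cmod \<beta>)\<^sup>2"
    and "R \<equiv> Re (a * \<alpha> * cnj (b * \<beta>) + cnj (a * \<alpha>) * b * \<beta>)"
    and "C \<equiv> (\<lambda>k \<gamma> \<delta>::nat. (- (cmod b)\<^sup>2 / (cmod a)\<^sup>2) ^ (\<gamma> + \<delta>)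
              * real ((k - 1) choose (\<gamma> - 1)) * real ((k - 1) choose (\<delta> - 1))
              * real ((n - k - 1) choose (\<gamma> - 1)) * real ((n - k - 1) choose (\<delta> - 1)))"
  shows "(odd m \<longrightarrow>
           qw_moment a b c d \<alpha> \<beta> n m =
             A ^ (n - 1) *
              (- (real n ^ m) * ((A - B) * D + 2 * R)
               + (\<Sum>k=1..(n - 1) div 2. \<Sum>\<gamma>=1..k. \<Sum>\<delta>=1..k.
                   C k \<gamma> \<delta> * (real n - 2 * real k) ^ (m + 1) / (real \<gamma> * real \<delta>)
                   * (- (real n * (A - B) + real \<gamma> + real \<delta>) * D
                      + ((real \<gamma> + real \<delta>) / B - 2 * real n) * R))))
       \<and> (even m \<longrightarrow>
           qw_moment a b c d \<alpha> \<beta> n m =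
             A ^ (n - 1) *
              (real n ^ m
               + (\<Sum>k=1..(n - 1) div 2. \<Sum>\<gamma>=1..k. \<Sum>\<delta>=1..k.
                   C k \<gamma> \<delta> * (real n - 2 * real k) ^ m / (real \<gamma> * real \<delta>)
                   * ((real n - real k)\<^sup>2 + (real k)\<^sup>2 - real n * (real \<gamma> + real \<delta>)
                      + 2 * real \<gamma> * real \<delta> / B))))"
proof -
  have A0: "A \<noteq> 0" unfolding A_def using nz by auto
  have B0: "B \<noteq> 0" unfolding B_def using nz by auto
  note nrm = norms_XY[OF U nz phi, folded A_def B_def D_def R_def]
  define NX where "NX = (cmod (a * \<alpha> + b * \<beta>))\<^sup>2"
  define NY where "NY = (cmod (c * \<alpha> + d * \<beta>))\<^sup>2"
  have NXY: "NX + NY = 1" "NX - NY = (A - B) * D + 2 * R" using nrm unfolding NX_def NY_def by auto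
  define z where "z = - B / A"
  define Pr where "Pr = (\<lambda>l. (cmod (fst (UW a b c d \<alpha> \<beta> l (n - l))))\<^sup>2 + (cmod (snd (UW a b c d \<alpha> \<beta> l (n - l))))\<^sup>2)"
  define x where "x = (\<lambda>l::nat. real_of_int (int n - 2 * int l))"
  define h where "h = (n - 1) div 2"
  define sg0 where "sg0 = (\<lambda>k::nat. z * Ssum z (k - 1) (n - k - 1))"
  define sg1 where "sg1 = (\<lambda>k::nat. s1sum z (k - 1) (n - k - 1))"
  obtain n' where n': "n = Suc n'" using n by (cases n) auto
  have mom: "qw_moment a b c d \<alpha> \<beta> n m = (\<Sum>l=0..n. x l ^ m * Pr l)"
    unfolding moment_sum x_def Pr_def ..
  have dA: "(cmod d)\<^sup>2 = A"
  proof -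
    have u1: "a * cnj a + b * cnj b = 1" and u5: "cnj b * b + cnj d * d = 1" using U unfolding unitary2_def by auto
    have "complex_of_real ((cmod d)\<^sup>2) = complex_of_real ((cmod a)\<^sup>2)"
      unfolding complex_norm_square using u1 u5 by algebra
    then show ?thesis unfolding A_def by (metis of_real_eq_iff)
  qed
  have P0: "Pr 0 = A ^ (n - 1) * NY"
  proof -
    have "Pr 0 = (cmod (d ^ n' * (c * \<alpha> + d * \<beta>)))\<^sup>2" unfolding Pr_def n' by (simp del: UW.simps add: UW_edge2)
    also have "\<dots> = ((cmod d)\<^sup>2) ^ n' * NY" unfolding NY_def norm_mult norm_power
      by (simp add: power_mult_distrib power_mult[symmetric] mult.commute)
    finally show ?thesis unfolding dA n' by simp
  qed
  have PN: "Pr n = A ^ (n - 1) * NX"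
  proof -
    have "Pr n = (cmod (a ^ n' * (a * \<alpha> + b * \<beta>)))\<^sup>2" unfolding Pr_def n' by (simp del: UW.simps add: UW_edge1)
    also have "\<dots> = ((cmod a)\<^sup>2) ^ n' * NX" unfolding NX_def norm_mult norm_power
      by (simp add: power_mult_distrib power_mult[symmetric] mult.commute)
    finally show ?thesis unfolding A_def n' by simp
  qed
  have x0: "x 0 = real n" and xn: "x n = - real n" unfolding x_def by auto
  have xk: "x k = real n - 2 * real k" if "k \<le> n" for k unfolding x_def using that by simp
  have xnk: "x (n - k) = - (real n - 2 * real k)" if "k \<le> n" for k unfolding x_def using that by (simp add: of_nat_diff)
  have split: "(\<Sum>l=0..n. x l ^ m * Pr l) = x 0 ^ m * Pr 0 + x n ^ m * Pr n + (\<Sum>l=1..n-1. x l ^ m * Pr l)"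
    unfolding n' by (simp add: sum.atLeast0_atMost_Suc sum.atLeast_Suc_atMost)
  have pair: "(\<Sum>l=1..n-1. x l ^ m * Pr l) = (\<Sum>k=1..h. x k ^ m * Pr k + x (n - k) ^ m * Pr (n - k))"
    unfolding h_def
  proof (rule pair_sum)
    assume "even n"
    then have "x (n div 2) = 0" unfolding x_def by auto
    then show "x (n div 2) ^ m * Pr (n div 2) = 0" using m by simp
  qed
  have krange: "1 \<le> k" "2 * k < n" "k < n" if "k \<in> {1..h}" for k using that n unfolding h_def by auto
  have perk: "Pr k + Pr (n - k) = A ^ (n - 1) * (((real k)\<^sup>2 + (real n - real k)\<^sup>2) * (sg1 k)\<^sup>2 - 2 * real n * sg0 k * sg1 k + 2 * (sg0 k)\<^sup>2 / B)"
    "Pr k - Pr (n - k) = A ^ (n - 1) * ((real n - 2 * real k) * ((sg1 k)\<^sup>2 * (- real n * (A - B) * D - 2 * real n * R) + 2 * sg0 k * sg1 k * (R / B - D)))"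
    if "k \<in> {1..h}" for k
    using per_k[OF U nz phi krange(1)[OF that] krange(3)[OF that]]
    unfolding Pr_def sg0_def sg1_def z_def A_def B_def D_def R_def by auto
  define sg where "sg = (\<lambda>k \<gamma>::nat. z ^ \<gamma> * real ((k - 1) choose (\<gamma> - 1)) * real ((n - k - 1) choose (\<gamma> - 1)))"
  have Csg: "C k \<gamma> \<delta> = sg k \<gamma> * sg k \<delta>" for k \<gamma> \<delta>
    unfolding C_def sg_def z_def A_def B_def by (simp add: power_add)
  have sums: "(\<Sum>\<gamma>=1..k. sg k \<gamma>) = sg0 k" "(\<Sum>\<gamma>=1..k. sg k \<gamma> / real \<gamma>) = sg1 k" if hk: "k \<in> {1..h}" for k
  proof -
    obtain p where p: "k = Suc p" using krange(1)[OF hk] by (cases k) auto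
    show "(\<Sum>\<gamma>=1..k. sg k \<gamma>) = sg0 k"
      unfolding sg_def sg0_def using sig0_eq[of z p "n - k - 1"] unfolding p by simp
    show "(\<Sum>\<gamma>=1..k. sg k \<gamma> / real \<gamma>) = sg1 k"
      unfolding sg_def sg1_def using sig1_eq[of z p "n - k - 1"] unfolding p by simp
  qed
  have inner_even: "(\<Sum>\<gamma>=1..k. \<Sum>\<delta>=1..k.
                   C k \<gamma> \<delta> * (real n - 2 * real k) ^ m / (real \<gamma> * real \<delta>)
                   * ((real n - real k)\<^sup>2 + (real k)\<^sup>2 - real n * (real \<gamma> + real \<delta>)
                      + 2 * real \<gamma> * real \<delta> / B))
     = (real n - 2 * real k) ^ m * (((real k)\<^sup>2 + (real n - real k)\<^sup>2) * (sg1 k)\<^sup>2 - 2 * real n * sg0 k * sg1 k + 2 * (sg0 k)\<^sup>2 / B)"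
    if "k \<in> {1..h}" for k
  proof -
    define y where "y = (real n - 2 * real k) ^ m"
    have "(\<Sum>\<gamma>=1..k. \<Sum>\<delta>=1..k.
                   C k \<gamma> \<delta> * (real n - 2 * real k) ^ m / (real \<gamma> * real \<delta>)
                   * ((real n - real k)\<^sup>2 + (real k)\<^sup>2 - real n * (real \<gamma> + real \<delta>)
                      + 2 * real \<gamma> * real \<delta> / B))
      = (\<Sum>\<gamma>=1..k. \<Sum>\<delta>=1..k. (y * ((real n - real k)\<^sup>2 + (real k)\<^sup>2)) * ((sg k \<gamma> / real \<gamma>) * (sg k \<delta> / real \<delta>))
          + (- y * real n) * (sg k \<gamma> * (sg k \<delta> / real \<delta>) + (sg k \<gamma> / real \<gamma>) * sg k \<delta>)
          + (y * 2 / B) * (sg k \<gamma> * sg k \<delta>))"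
    proof (intro sum.cong refl)
      fix \<gamma> \<delta> assume g: "\<gamma> \<in> {1..k}" and dl: "\<delta> \<in> {1..k}"
      then have g0: "real \<gamma> \<noteq> 0" and d0: "real \<delta> \<noteq> 0" by auto
      show "C k \<gamma> \<delta> * (real n - 2 * real k) ^ m / (real \<gamma> * real \<delta>)
                   * ((real n - real k)\<^sup>2 + (real k)\<^sup>2 - real n * (real \<gamma> + real \<delta>)
                      + 2 * real \<gamma> * real \<delta> / B) =
          (y * ((real n - real k)\<^sup>2 + (real k)\<^sup>2)) * ((sg k \<gamma> / real \<gamma>) * (sg k \<delta> / real \<delta>))
          + (- y * real n) * (sg k \<gamma> * (sg k \<delta> / real \<delta>) + (sg k \<gamma> / real \<gamma>) * sg k \<delta>)
          + (y * 2 / B) * (sg k \<gamma> * sg k \<delta>)"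
        unfolding Csg y_def using g0 d0 B0 by (simp add: field_simps)
    qed
    also have "\<dots> = (y * ((real n - real k)\<^sup>2 + (real k)\<^sup>2)) * (sg1 k)\<^sup>2 + 2 * (- y * real n) * (sg1 k * sg0 k) + (y * 2 / B) * (sg0 k)\<^sup>2"
      unfolding double_sum_lemma sums[OF that] ..
    finally show ?thesis unfolding y_def by (simp add: algebra_simps)
  qed
  have inner_odd: "(\<Sum>\<gamma>=1..k. \<Sum>\<delta>=1..k.
                   C k \<gamma> \<delta> * (real n - 2 * real k) ^ (m + 1) / (real \<gamma> * real \<delta>)
                   * (- (real n * (A - B) + real \<gamma> + real \<delta>) * D
                      + ((real \<gamma> + real \<delta>) / B - 2 * real n) * R))
     = (real n - 2 * real k) ^ m * ((real n - 2 * real k) * ((sg1 k)\<^sup>2 * (- real n * (A - B) * D - 2 * real n * R) + 2 * sg0 k * sg1 k * (R / B - D)))"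
    if "k \<in> {1..h}" for k
  proof -
    define y where "y = (real n - 2 * real k) ^ (m + 1)"
    have "(\<Sum>\<gamma>=1..k. \<Sum>\<delta>=1..k.
                   C k \<gamma> \<delta> * (real n - 2 * real k) ^ (m + 1) / (real \<gamma> * real \<delta>)
                   * (- (real n * (A - B) + real \<gamma> + real \<delta>) * D
                      + ((real \<gamma> + real \<delta>) / B - 2 * real n) * R))
      = (\<Sum>\<gamma>=1..k. \<Sum>\<delta>=1..k. (y * (- real n * (A - B) * D - 2 * real n * R)) * ((sg k \<gamma> / real \<gamma>) * (sg k \<delta> / real \<delta>))
          + (y * (R / B - D)) * (sg k \<gamma> * (sg k \<delta> / real \<delta>) + (sg k \<gamma> / real \<gamma>) * sg k \<delta>)
          + 0 * (sg k \<gamma> * sg k \<delta>))"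
    proof (intro sum.cong refl)
      fix \<gamma> \<delta> assume g: "\<gamma> \<in> {1..k}" and dl: "\<delta> \<in> {1..k}"
      then have g0: "real \<gamma> \<noteq> 0" and d0: "real \<delta> \<noteq> 0" by auto
      show "C k \<gamma> \<delta> * (real n - 2 * real k) ^ (m + 1) / (real \<gamma> * real \<delta>)
                   * (- (real n * (A - B) + real \<gamma> + real \<delta>) * D
                      + ((real \<gamma> + real \<delta>) / B - 2 * real n) * R) =
          (y * (- real n * (A - B) * D - 2 * real n * R)) * ((sg k \<gamma> / real \<gamma>) * (sg k \<delta> / real \<delta>))
          + (y * (R / B - D)) * (sg k \<gamma> * (sg k \<delta> / real \<delta>) + (sg k \<gamma> / real \<gamma>) * sg k \<delta>)
          + 0 * (sg k \<gamma> * sg k \<delta>)"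
        unfolding Csg y_def using g0 d0 B0 by (simp add: field_simps)
    qed
    also have "\<dots> = (y * (- real n * (A - B) * D - 2 * real n * R)) * (sg1 k)\<^sup>2 + 2 * (y * (R / B - D)) * (sg1 k * sg0 k) + 0 * (sg0 k)\<^sup>2"
      unfolding double_sum_lemma sums[OF that] ..
    also have "\<dots> = (real n - 2 * real k) ^ m * ((real n - 2 * real k) * ((sg1 k)\<^sup>2 * (- real n * (A - B) * D - 2 * real n * R) + 2 * sg0 k * sg1 k * (R / B - D)))"
      unfolding y_def using B0 by (simp add: field_simps)
    finally show ?thesis .
  qed
  show ?thesis
  proof (intro conjI impI)
    assume odd: "odd m"
    have "(\<Sum>k=1..h. x k ^ m * Pr k + x (n - k) ^ m * Pr (n - k))
       = (\<Sum>k=1..h. A ^ (n - 1) * (\<Sum>\<gamma>=1..k. \<Sum>\<delta>=1..k.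
                   C k \<gamma> \<delta> * (real n - 2 * real k) ^ (m + 1) / (real \<gamma> * real \<delta>)
                   * (- (real n * (A - B) + real \<gamma> + real \<delta>) * D
                      + ((real \<gamma> + real \<delta>) / B - 2 * real n) * R)))"
    proof (rule sum.cong[OF refl])
      fix k assume k: "k \<in> {1..h}"
      have "x k ^ m * Pr k + x (n - k) ^ m * Pr (n - k) = (real n - 2 * real k) ^ m * (Pr k - Pr (n - k))"
      proof -
        have xx: "x (n - k) ^ m = - ((real n - 2 * real k) ^ m)"
          using krange(3)[OF k] by (simp only: xnk power_minus_odd[OF odd])
        have xk': "x k ^ m = (real n - 2 * real k) ^ m" using krange(3)[OF k] by (simp only: xk)
        show ?thesis unfolding xx xk' by (simp add: algebra_simps)
      qed
      then show "x k ^ m * Pr k + x (n - k) ^ m * Pr (n - k) = A ^ (n - 1) * (\<Sum>\<gamma>=1..k. \<Sum>\<delta>=1..k.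
                   C k \<gamma> \<delta> * (real n - 2 * real k) ^ (m + 1) / (real \<gamma> * real \<delta>)
                   * (- (real n * (A - B) + real \<gamma> + real \<delta>) * D
                      + ((real \<gamma> + real \<delta>) / B - 2 * real n) * R))"
        unfolding inner_odd[OF k] perk(2)[OF k] by (simp add: algebra_simps)
    qed
    then show "qw_moment a b c d \<alpha> \<beta> n m = A ^ (n - 1) *
              (- (real n ^ m) * ((A - B) * D + 2 * R)
               + (\<Sum>k=1..(n - 1) div 2. \<Sum>\<gamma>=1..k. \<Sum>\<delta>=1..k.
                   C k \<gamma> \<delta> * (real n - 2 * real k) ^ (m + 1) / (real \<gamma> * real \<delta>)
                   * (- (real n * (A - B) + real \<gamma> + real \<delta>) * D
                      + ((real \<gamma> + real \<delta>) / B - 2 * real n) * R)))"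
      unfolding mom split pair P0 PN x0 xn h_def[symmetric] NXY(2)[symmetric]
      using odd by (simp add: sum_distrib_left power_minus_odd algebra_simps)
  next
    assume ev: "even m"
    have "(\<Sum>k=1..h. x k ^ m * Pr k + x (n - k) ^ m * Pr (n - k))
       = (\<Sum>k=1..h. A ^ (n - 1) * (\<Sum>\<gamma>=1..k. \<Sum>\<delta>=1..k.
                   C k \<gamma> \<delta> * (real n - 2 * real k) ^ m / (real \<gamma> * real \<delta>)
                   * ((real n - real k)\<^sup>2 + (real k)\<^sup>2 - real n * (real \<gamma> + real \<delta>)
                      + 2 * real \<gamma> * real \<delta> / B)))"
    proof (rule sum.cong[OF refl])
      fix k assume k: "k \<in> {1..h}"
      have "x k ^ m * Pr k + x (n - k) ^ m * Pr (n - k) = (real n - 2 * real k) ^ m * (Pr k + Pr (n - k))"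
      proof -
        have xx: "x (n - k) ^ m = (real n - 2 * real k) ^ m"
          using krange(3)[OF k] by (simp only: xnk power_minus_even[OF ev])
        have xk': "x k ^ m = (real n - 2 * real k) ^ m" using krange(3)[OF k] by (simp only: xk)
        show ?thesis unfolding xx xk' by (simp add: algebra_simps)
      qed
      then show "x k ^ m * Pr k + x (n - k) ^ m * Pr (n - k) = A ^ (n - 1) * (\<Sum>\<gamma>=1..k. \<Sum>\<delta>=1..k.
                   C k \<gamma> \<delta> * (real n - 2 * real k) ^ m / (real \<gamma> * real \<delta>)
                   * ((real n - real k)\<^sup>2 + (real k)\<^sup>2 - real n * (real \<gamma> + real \<delta>)
                      + 2 * real \<gamma> * real \<delta> / B))"
        unfolding inner_even[OF k] perk(1)[OF k] by (simp add: algebra_simps)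
    qed
    moreover have NYe: "NY = 1 - NX" using NXY(1) by simp
    ultimately show "qw_moment a b c d \<alpha> \<beta> n m = A ^ (n - 1) *
              (real n ^ m
               + (\<Sum>k=1..(n - 1) div 2. \<Sum>\<gamma>=1..k. \<Sum>\<delta>=1..k.
                   C k \<gamma> \<delta> * (real n - 2 * real k) ^ m / (real \<gamma> * real \<delta>)
                   * ((real n - real k)\<^sup>2 + (real k)\<^sup>2 - real n * (real \<gamma> + real \<delta>)
                      + 2 * real \<gamma> * real \<delta> / B)))"
      unfolding mom split pair P0 PN x0 xn h_def[symmetric] NYe
      using ev by (simp add: sum_distrib_left power_minus_even algebra_simps)
  qed
qed

end
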